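(* Let $d\in\mathbb{N}$, $K\in\mathbb{N}$, $K\ge 1$, let $\mathcal{G}$, $n$, $\nabla$, $\triangle_K$ be as in the context, let $f\colon\mathcal{G}\to\mathbb{R}$ be given, and let $\lambda_1,\dots,\lambda_K>0$, $\gamma>0$. Then the functional $$E(u,c,l)=\sum_{k=1}^K\sum_{j\in\mathcal{G}}u_k(j)\,|f(j)-l(j)-c_k|^2+\sum_{k=1}^K\lambda_k\,\big\|\,|\nabla u_k|\,\big\|_1+\gamma\|\nabla l\|_2^2+\iota_{\triangle_K^n}(u),$$ defined for $u=(u_k(j))_{j\in\mathcal{G},\,k=1,\dots,K}\in\mathbb{R}^{nK}$, $c=(c_1,\dots,c_K)\in\mathbb{R}^K$, $l\in\mathbb{R}^{\mathcal{G}}\cong\mathbb{R}^n$, attains its minimum, i.e. there exists $(u^*,c^*,l^* )$ with $E(u^*,c^*,l^* )=\inf_{(u,c,l)}E(u,c,l)<\infty$.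
   Context: $\mathcal{G}=\{1,\dots,n_1\}\times\dots\times\{1,\dots,n_d\}$ is a $d$-dimensional image grid with $n=n_1\cdots n_d$ pixels. For $v\colon\mathcal{G}\to\mathbb{R}$ the discrete gradient $\nabla v\colon\mathcal{G}\to\mathbb{R}^d$ uses forward differences with mirror boundary conditions: $(\nabla v)_i(j)=v(j+e_i)-v(j)$ if $j_i<n_i$ and $(\nabla v)_i(j)=0$ if $j_i=n_i$ ($e_i$ the $i$-th unit vector). $|\nabla v|(j)$ denotes the Euclidean norm of $(\nabla v)(j)\in\mathbb{R}^d$, $\|\cdot\|_1$ is the sum of absolute values over $j\in\mathcal{G}$, and $\|A\|_2$ denotes the square root of the sum of squares of all entries of an array $A$. $u_k=(u_k(j))_{j\in\mathcal{G}}$. $\triangle_K=\{v\in[0,1]^K:\sum_{k=1}^Kv_k=1\}$ is the probability simplex and $u\in\triangle_K^n$ means $(u_k(j))_{k=1}^K\in\triangle_K$ for every $j\in\mathcal{G}$. $\iota_S$ is the indicator function of a set $S$ ($0$ on $S$, $+\infty$ outside). *)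

theory Defs
  imports "HOL-Analysis.Analysis" "HOL-Library.Extended_Real"
begin

type_synonym pixel = "nat \<Rightarrow> nat"

definition grid :: "nat \<Rightarrow> (nat \<Rightarrow> nat) \<Rightarrow> pixel set" where
  "grid d ns = PiE {1..d} (\<lambda>i. {1..ns i})"

text \<open>Forward difference with mirror boundary conditions, i-th component.\<close>
definition grad :: "(nat \<Rightarrow> nat) \<Rightarrow> (pixel \<Rightarrow> real) \<Rightarrow> nat \<Rightarrow> pixel \<Rightarrow> real" where
  "grad ns v i j = (if j i < ns i then v (j(i := j i + 1)) - v j else 0)"

definition grad_abs :: "nat \<Rightarrow> (nat \<Rightarrow> nat) \<Rightarrow> (pixel \<Rightarrow> real) \<Rightarrow> pixel \<Rightarrow> real" where
  "grad_abs d ns v j = sqrt (\<Sum>i\<in>{1..d}. (grad ns v i j)\<^sup>2)"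

definition in_simplex_field :: "nat \<Rightarrow> (nat \<Rightarrow> nat) \<Rightarrow> nat \<Rightarrow> (nat \<Rightarrow> pixel \<Rightarrow> real) \<Rightarrow> bool" where
  "in_simplex_field d ns K u \<longleftrightarrow>
     (\<forall>j\<in>grid d ns. (\<forall>k\<in>{1..K}. 0 \<le> u k j \<and> u k j \<le> 1) \<and> (\<Sum>k\<in>{1..K}. u k j) = 1)"

definition energy ::
  "nat \<Rightarrow> (nat \<Rightarrow> nat) \<Rightarrow> nat \<Rightarrow> (pixel \<Rightarrow> real) \<Rightarrow> (nat \<Rightarrow> real) \<Rightarrow> real
   \<Rightarrow> (nat \<Rightarrow> pixel \<Rightarrow> real) \<Rightarrow> (nat \<Rightarrow> real) \<Rightarrow> (pixel \<Rightarrow> real) \<Rightarrow> ereal" where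
  "energy d ns K f lam \<gamma> u c l =
     (if in_simplex_field d ns K u then
        ereal ((\<Sum>k\<in>{1..K}. \<Sum>j\<in>grid d ns. u k j * \<bar>f j - l j - c k\<bar>\<^sup>2)
             + (\<Sum>k\<in>{1..K}. lam k * (\<Sum>j\<in>grid d ns. \<bar>grad_abs d ns (u k) j\<bar>))
             + \<gamma> * (\<Sum>j\<in>grid d ns. \<Sum>i\<in>{1..d}. (grad ns l i j)\<^sup>2))
      else \<infinity>)"

end

theory Submission
  imports Defs
begin

lemma compact_PiE_UNIV:
  fixes S :: "'a \<Rightarrow> 'b::topological_space set"
  assumes "\<And>i. compact (S i)"
  shows "compact (PiE UNIV S)"
proof -
  have "compactin (product_topology (\<lambda>i. euclidean) UNIV) (PiE UNIV S)"
    using assms by (subst compactin_PiE) auto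
  then show ?thesis by (simp add: euclidean_product_topology)
qed

lemma cont_coord2:
  "continuous_on S (\<lambda>x. (g x :: 'a \<Rightarrow> 'b \<Rightarrow> real) k j)" if "continuous_on S g"
proof -
  have a: "continuous_on UNIV (\<lambda>u::'a \<Rightarrow> 'b \<Rightarrow> real. u k)" by simp
  have b: "continuous_on UNIV (\<lambda>u::'b \<Rightarrow> real. u j)" by simp
  have "continuous_on UNIV (\<lambda>u::'a \<Rightarrow> 'b \<Rightarrow> real. u k j)"
    using continuous_on_compose2[OF b a] by simp
  then show ?thesis using continuous_on_compose2[OF _ that] by auto
qed

lemma cont_coord1:
  "continuous_on S (\<lambda>x. (g x :: 'a \<Rightarrow> real) k)" if "continuous_on S g"
  using continuous_on_compose2[OF continuous_on_product_coordinates that] by auto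

lemma cont_grad:
  assumes "\<And>p. continuous_on S (\<lambda>x. g x p)"
  shows "continuous_on S (\<lambda>x. grad ns (g x) i j)"
proof (cases "j i < ns i")
  case True
  then show ?thesis unfolding grad_def using continuous_on_diff[OF assms assms] by simp
next
  case False
  then show ?thesis unfolding grad_def by simp
qed

definition Gf :: "nat \<Rightarrow> (nat\<Rightarrow>nat) \<Rightarrow> nat \<Rightarrow> (pixel \<Rightarrow> real) \<Rightarrow> (nat\<Rightarrow>real) \<Rightarrow> real \<Rightarrow> (nat \<Rightarrow> pixel \<Rightarrow> real) \<Rightarrow> (nat \<Rightarrow> real) \<Rightarrow> (pixel\<Rightarrow>real) \<Rightarrow> real" where
  "Gf d ns K f lam \<gamma> u c l =
        ((\<Sum>k\<in>{1..K}. \<Sum>j\<in>grid d ns. u k j * \<bar>f j - l j - c k\<bar>\<^sup>2)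
             + (\<Sum>k\<in>{1..K}. lam k * (\<Sum>j\<in>grid d ns. \<bar>grad_abs d ns (u k) j\<bar>))
             + \<gamma> * (\<Sum>j\<in>grid d ns. \<Sum>i\<in>{1..d}. (grad ns l i j)\<^sup>2))"

lemma energy_eq: "energy d ns K f lam \<gamma> u c l =
   (if in_simplex_field d ns K u then ereal (Gf d ns K f lam \<gamma> u c l) else \<infinity>)"
  by (simp add: energy_def Gf_def)

lemma cont_Gf:
  "continuous_on S (\<lambda>x::(nat \<Rightarrow> pixel \<Rightarrow> real) \<times> (nat \<Rightarrow> real) \<times> (pixel \<Rightarrow> real).
     Gf d ns K f lam \<gamma> (fst x) (fst (snd x)) (snd (snd x)))"
proof -
  have cu: "continuous_on S (\<lambda>x::(nat \<Rightarrow> pixel \<Rightarrow> real) \<times> (nat \<Rightarrow> real) \<times> (pixel \<Rightarrow> real). fst x k j)" for k j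
    using cont_coord2[where g=fst and k=k and j=j and S=S] continuous_on_fst[OF continuous_on_id, of S] by simp
  have cc: "continuous_on S (\<lambda>x::(nat \<Rightarrow> pixel \<Rightarrow> real) \<times> (nat \<Rightarrow> real) \<times> (pixel \<Rightarrow> real). fst (snd x) k)" for k
    using cont_coord1[where g="\<lambda>x. fst (snd x)" and k=k and S=S] continuous_on_fst[OF continuous_on_snd[OF continuous_on_id], of S] by simp
  have cl: "continuous_on S (\<lambda>x::(nat \<Rightarrow> pixel \<Rightarrow> real) \<times> (nat \<Rightarrow> real) \<times> (pixel \<Rightarrow> real). snd (snd x) k)" for k
    using cont_coord1[where g="\<lambda>x. snd (snd x)" and k=k and S=S] continuous_on_snd[OF continuous_on_snd[OF continuous_on_id], of S] by simp
  have gu: "continuous_on S (\<lambda>x::(nat \<Rightarrow> pixel \<Rightarrow> real) \<times> (nat \<Rightarrow> real) \<times> (pixel \<Rightarrow> real). grad ns (fst x k) i j)" for k i j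
    using cont_grad[where g="\<lambda>x. fst x k" and S=S, OF cu] .
  have gl: "continuous_on S (\<lambda>x::(nat \<Rightarrow> pixel \<Rightarrow> real) \<times> (nat \<Rightarrow> real) \<times> (pixel \<Rightarrow> real). grad ns (snd (snd x)) i j)" for i j
    using cont_grad[where g="\<lambda>x. snd (snd x)" and S=S, OF cl] .
  show ?thesis
    unfolding Gf_def grad_abs_def
    by (intro continuous_on_add continuous_on_mult continuous_on_sum continuous_on_const
        continuous_on_rabs continuous_on_real_sqrt continuous_on_power continuous_on_diff cu cc cl gu gl)
qed

lemma closed_simplex: "closed {u. in_simplex_field d ns K u}"
proof -
  have "{u. in_simplex_field d ns K u} =
     (\<Inter>j\<in>grid d ns. (\<Inter>k\<in>{1..K}. {u. 0 \<le> u k j} \<inter> {u. u k j \<le> 1}) \<inter> {u. (\<Sum>k\<in>{1..K}. u k j) = 1})"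
    by (auto simp: in_simplex_field_def)
  moreover have "closed \<dots>"
    by (intro closed_INT closed_Int ballI closed_Collect_le closed_Collect_eq continuous_on_sum
        continuous_on_const cont_coord2[where g="\<lambda>x. x", OF continuous_on_id])
  ultimately show ?thesis by simp
qed

lemma grid_step:
  assumes "j \<in> grid d ns" "i \<in> {1..d}" "j i < ns i"
  shows "j(i := j i + 1) \<in> grid d ns"
  using assms by (auto simp: grid_def PiE_iff extensional_def)

lemma grad_cong:
  assumes "\<forall>p\<in>grid d ns. v p = w p" "j \<in> grid d ns" "i \<in> {1..d}"
  shows "grad ns v i j = grad ns w i j"
  using assms grid_step[OF assms(2,3)] by (auto simp: grad_def)

lemma grad_shift: "grad ns (\<lambda>p. v p - t) i j = grad ns v i j"
  by (simp add: grad_def)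

definition j0 :: "nat \<Rightarrow> pixel" where "j0 d = (\<lambda>i. if i \<in> {1..d} then 1 else undefined)"

lemma j0_grid: "j \<in> grid d ns \<Longrightarrow> j0 d \<in> grid d ns"
  by (force simp: grid_def PiE_iff j0_def extensional_def)

lemma path_bound:
  assumes B: "\<forall>j\<in>grid d ns. \<forall>i\<in>{1..d}. \<bar>grad ns l i j\<bar> \<le> B"
  shows "j \<in> grid d ns \<Longrightarrow> (\<Sum>i\<in>{1..d}. j i - 1) = m \<Longrightarrow> \<bar>l j - l (j0 d)\<bar> \<le> B * real m"
proof (induction m arbitrary: j)
  case 0
  then have "\<forall>i\<in>{1..d}. j i = 1" by (auto simp: grid_def PiE_iff intro: le_antisym)
  then have "j = j0 d" using 0 by (auto simp: grid_def PiE_iff j0_def extensional_def)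
  then show ?case by simp
next
  case (Suc m)
  then obtain i where i: "i \<in> {1..d}" "j i - 1 > 0"
    by (metis (no_types, lifting) sum.neutral zero_less_iff_neq_zero nat.distinct(1))
  define j' where "j' = j(i := j i - 1)"
  have ji: "j i \<le> ns i" "2 \<le> j i" using Suc.prems i by (auto simp: grid_def PiE_iff)
  have j'g: "j' \<in> grid d ns" using Suc.prems i ji by (force simp: grid_def PiE_iff extensional_def j'_def)
  have "(\<Sum>i\<in>{1..d}. j i - 1) = (j i - 1) + (\<Sum>k\<in>{1..d}-{i}. j k - 1)"
    using i by (simp add: sum.remove)
  moreover have "(\<Sum>i\<in>{1..d}. j' i - 1) = (j' i - 1) + (\<Sum>k\<in>{1..d}-{i}. j' k - 1)"
    using i by (simp add: sum.remove)
  moreover have "(\<Sum>k\<in>{1..d}-{i}. j' k - 1) = (\<Sum>k\<in>{1..d}-{i}. j k - 1)"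
    by (rule sum.cong) (auto simp: j'_def)
  ultimately have "(\<Sum>i\<in>{1..d}. j' i - 1) = m" using Suc.prems ji by (simp add: j'_def)
  then have IH: "\<bar>l j' - l (j0 d)\<bar> \<le> B * real m" using Suc.IH j'g by blast
  have "j'(i := j' i + 1) = j" using ji by (auto simp: j'_def)
  moreover have "j' i < ns i" using ji by (simp add: j'_def)
  ultimately have "grad ns l i j' = l j - l j'" by (simp add: grad_def)
  then have "\<bar>l j - l j'\<bar> \<le> B" using B j'g i by force
  then show ?case using IH by (simp add: algebra_simps)
qed

lemma Gf_lb:
  assumes "in_simplex_field d ns K u" "\<forall>k\<in>{1..K}. lam k > 0" "\<gamma> > 0"
  shows "\<gamma> * (\<Sum>j\<in>grid d ns. \<Sum>i\<in>{1..d}. (grad ns l i j)\<^sup>2) \<le> Gf d ns K f lam \<gamma> u c l"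
    and "0 \<le> Gf d ns K f lam \<gamma> u c l"
proof -
  have a: "0 \<le> (\<Sum>k\<in>{1..K}. \<Sum>j\<in>grid d ns. u k j * \<bar>f j - l j - c k\<bar>\<^sup>2)"
    using assms(1) by (intro sum_nonneg mult_nonneg_nonneg) (auto simp: in_simplex_field_def)
  have b: "0 \<le> (\<Sum>k\<in>{1..K}. lam k * (\<Sum>j\<in>grid d ns. \<bar>grad_abs d ns (u k) j\<bar>))"
    using assms(2) by (intro sum_nonneg mult_nonneg_nonneg) (auto intro: less_imp_le)
  have c: "0 \<le> \<gamma> * (\<Sum>j\<in>grid d ns. \<Sum>i\<in>{1..d}. (grad ns l i j)\<^sup>2)"
    using assms(3) by (intro sum_nonneg mult_nonneg_nonneg) auto
  show "\<gamma> * (\<Sum>j\<in>grid d ns. \<Sum>i\<in>{1..d}. (grad ns l i j)\<^sup>2) \<le> Gf d ns K f lam \<gamma> u c l"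
    using a b unfolding Gf_def by linarith
  show "0 \<le> Gf d ns K f lam \<gamma> u c l"
    using a b c unfolding Gf_def by linarith
qed

lemma finite_grid: "finite (grid d ns)"
  by (simp add: grid_def finite_PiE)

lemma clamp_le:
  fixes a x R :: real
  assumes "\<bar>a\<bar> \<le> R"
  shows "\<bar>a - max (-R) (min R x)\<bar>\<^sup>2 \<le> \<bar>a - x\<bar>\<^sup>2"
proof -
  have "\<bar>a - max (-R) (min R x)\<bar> \<le> \<bar>a - x\<bar>" using assms unfolding max_def min_def abs_le_iff by (auto split: if_splits)
  then show ?thesis by (metis abs_ge_zero power2_abs power_mono)
qed

theorem mainTheorem1:
  fixes d K :: nat and ns :: "nat \<Rightarrow> nat" and f :: "pixel \<Rightarrow> real"
    and lam :: "nat \<Rightarrow> real" and \<gamma> :: real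
  assumes "K \<ge> 1"
    and "\<forall>k\<in>{1..K}. lam k > 0"
    and "\<gamma> > 0"
  shows "\<exists>u c l. energy d ns K f lam \<gamma> u c l
                  = (INF (u, c, l) \<in> UNIV. energy d ns K f lam \<gamma> u c l)
               \<and> (INF (u, c, l) \<in> UNIV. energy d ns K f lam \<gamma> u c l) < \<infinity>"
proof -
  define gr where "gr = grid d ns"
  have fin: "finite gr" by (simp add: gr_def finite_grid)
  define G where "G x = Gf d ns K f lam \<gamma> (fst x) (fst (snd x)) (snd (snd x))" for x
  define u0 :: "nat \<Rightarrow> pixel \<Rightarrow> real" where "u0 k j = (if k = 1 \<and> j \<in> gr then 1 else 0)" for k j
  define x0 :: "(nat \<Rightarrow> pixel \<Rightarrow> real) \<times> (nat \<Rightarrow> real) \<times> (pixel \<Rightarrow> real)"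
    where "x0 = (u0, \<lambda>_. 0, \<lambda>_. 0)"
  have simp0: "in_simplex_field d ns K u0"
    using assms(1) by (auto simp: in_simplex_field_def u0_def gr_def if_distrib sum.delta cong: if_cong)
  define E0 where "E0 = G x0"
  have E0: "0 \<le> E0" unfolding E0_def G_def x0_def using Gf_lb(2)[OF simp0 assms(2,3)] by simp
  define B where "B = sqrt (E0 / \<gamma>)"
  have B0: "0 \<le> B" using E0 assms(3) by (simp add: B_def)
  define LB where "LB = B * real (\<Sum>i\<in>{1..d}. ns i)"
  have LB0: "0 \<le> LB" using B0 unfolding LB_def by (metis B0 mult_nonneg_nonneg of_nat_0_le_iff)
  define R where "R = (\<Sum>j\<in>gr. \<bar>f j\<bar>) + LB"
  have R0: "0 \<le> R" using LB0 unfolding R_def by (intro add_nonneg_nonneg sum_nonneg) auto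
  define U where "U = PiE UNIV (\<lambda>k. PiE UNIV (\<lambda>j. if k \<in> {1..K} \<and> j \<in> gr then {0..1} else {0::real}))
      \<inter> {u. in_simplex_field d ns K u}"
  define C where "C = PiE UNIV (\<lambda>k. if k \<in> {1..K} then {-R..R} else {0::real})"
  define L where "L = PiE (UNIV :: pixel set) (\<lambda>j. if j \<in> gr then {-LB..LB} else {0::real})"
  define S where "S = U \<times> C \<times> L"
  have "compact U" unfolding U_def
    by (intro compact_Int_closed closed_simplex compact_PiE_UNIV) auto
  moreover have "compact C" unfolding C_def by (intro compact_PiE_UNIV) auto
  moreover have "compact L" unfolding L_def by (intro compact_PiE_UNIV) auto
  ultimately have cS: "compact S" unfolding S_def by (intro compact_Times)
  have x0S: "x0 \<in> S"
    using simp0 R0 LB0 assms(1) by (auto simp: S_def U_def C_def L_def x0_def u0_def)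
  have "continuous_on S G" unfolding G_def by (rule cont_Gf)
  then obtain xm where xmS: "xm \<in> S" and xm: "\<And>y. y \<in> S \<Longrightarrow> G xm \<le> G y"
    using continuous_attains_inf[OF cS _] x0S by blast
  obtain um cm lm where xm_eq: "xm = (um, cm, lm)" by (cases xm) auto
  have simpm: "in_simplex_field d ns K um" using xmS by (auto simp: S_def U_def xm_eq)
  have key: "\<exists>y\<in>S. G y \<le> G (u, c, l)"
    if su: "in_simplex_field d ns K u" and le: "G (u, c, l) \<le> E0" for u c l
  proof -
    define t where "t = l (j0 d)"
    define u' where "u' k j = (if k \<in> {1..K} \<and> j \<in> gr then u k j else 0)" for k j
    define l' where "l' j = (if j \<in> gr then l j - t else 0)" for j
    define c' where "c' k = (if k \<in> {1..K} then max (-R) (min R (c k + t)) else 0)" for k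
    have su': "in_simplex_field d ns K u'"
      using su by (auto simp: in_simplex_field_def u'_def gr_def)
    have u'U: "u' \<in> U" using su su' by (auto simp: U_def u'_def in_simplex_field_def gr_def)
    have c'C: "c' \<in> C" using R0 by (auto simp: C_def c'_def)
    have regle: "\<gamma> * (\<Sum>j\<in>gr. \<Sum>i\<in>{1..d}. (grad ns l i j)\<^sup>2) \<le> E0"
      using Gf_lb(1)[OF su assms(2,3), of l f c] le by (simp add: G_def gr_def)
    have gB: "\<bar>grad ns l i j\<bar> \<le> B" if "j \<in> gr" "i \<in> {1..d}" for i j
    proof -
      have "(grad ns l i j)\<^sup>2 \<le> (\<Sum>i\<in>{1..d}. (grad ns l i j)\<^sup>2)"
        using that by (intro member_le_sum[of i "{1..d}" "\<lambda>i. (grad ns l i j)\<^sup>2"]) auto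
      also have "\<dots> \<le> (\<Sum>j\<in>gr. \<Sum>i\<in>{1..d}. (grad ns l i j)\<^sup>2)"
        using that fin by (intro member_le_sum[of j gr "\<lambda>j. \<Sum>i\<in>{1..d}. (grad ns l i j)\<^sup>2"]) (auto intro: sum_nonneg)
      also have "\<dots> \<le> E0 / \<gamma>" using regle assms(3) by (simp add: pos_le_divide_eq mult.commute)
      finally have "sqrt ((grad ns l i j)\<^sup>2) \<le> B" unfolding B_def by (rule real_sqrt_le_mono)
      then show ?thesis by simp
    qed
    have lbound: "\<bar>l j - t\<bar> \<le> LB" if "j \<in> gr" for j
    proof -
      have gB': "\<forall>j\<in>grid d ns. \<forall>i\<in>{1..d}. \<bar>grad ns l i j\<bar> \<le> B"
        unfolding gr_def[symmetric] using gB by blast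
      have "\<bar>l j - t\<bar> \<le> B * real (\<Sum>i\<in>{1..d}. j i - 1)"
        unfolding t_def by (rule path_bound[OF gB']) (use that in \<open>simp_all add: gr_def\<close>)
      also have "\<dots> \<le> LB" unfolding LB_def
      proof (rule mult_left_mono[OF _ B0])
        have "(\<Sum>i\<in>{1..d}. j i - 1) \<le> (\<Sum>i\<in>{1..d}. ns i)"
          proof (rule sum_mono)
          fix i assume "i \<in> {1..d}"
          then have "j i \<le> ns i" using that by (auto simp: gr_def grid_def PiE_iff)
          then show "j i - 1 \<le> ns i" by simp
        qed
        then show "real (\<Sum>i\<in>{1..d}. j i - 1) \<le> real (\<Sum>i\<in>{1..d}. ns i)" by (rule of_nat_mono)
      qed
      finally show ?thesis .
    qed
    have l'L: "l' \<in> L" unfolding L_def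
    proof (rule PiE_I)
      fix j
      show "l' j \<in> (if j \<in> gr then {-LB..LB} else {0})"
      proof (cases "j \<in> gr")
        case True
        then show ?thesis using lbound[OF True] by (simp add: l'_def abs_le_iff)
      next
        case False
        then show ?thesis by (simp add: l'_def)
      qed
    qed simp
    have tv: "grad_abs d ns (u' k) j = grad_abs d ns (u k) j" if "k \<in> {1..K}" "j \<in> gr" for k j
      unfolding grad_abs_def
      by (rule arg_cong[where f = sqrt], rule sum.cong, simp, rule arg_cong[where f = "\<lambda>x. x^2"],
          rule grad_cong) (use that in \<open>auto simp: u'_def gr_def\<close>)
    have reg: "grad ns l' i j = grad ns l i j" if "i \<in> {1..d}" "j \<in> gr" for i j
    proof -
      have "grad ns l' i j = grad ns (\<lambda>p. l p - t) i j"
        by (rule grad_cong) (use that in \<open>auto simp: l'_def gr_def\<close>)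
      then show ?thesis by (simp add: grad_shift)
    qed
    have dat: "u' k j * \<bar>f j - l' j - c' k\<bar>\<^sup>2 \<le> u k j * \<bar>f j - l j - c k\<bar>\<^sup>2"
      if "k \<in> {1..K}" "j \<in> gr" for k j
    proof -
      have fj: "\<bar>f j\<bar> \<le> (\<Sum>j\<in>gr. \<bar>f j\<bar>)" using that fin by (intro member_le_sum) auto
      have "\<bar>f j - l' j\<bar> \<le> R" using lbound[OF that(2)] fj that by (simp add: l'_def R_def)
      from clamp_le[OF this, of "c k + t"]
      have "\<bar>f j - l' j - c' k\<bar>\<^sup>2 \<le> \<bar>f j - l j - c k\<bar>\<^sup>2"
        using that by (simp add: c'_def l'_def algebra_simps)
      moreover have "0 \<le> u k j" using su that by (auto simp: in_simplex_field_def gr_def)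
      ultimately show ?thesis using that by (simp add: u'_def mult_left_mono)
    qed
    have D: "(\<Sum>k\<in>{1..K}. \<Sum>j\<in>gr. u' k j * \<bar>f j - l' j - c' k\<bar>\<^sup>2) \<le> (\<Sum>k\<in>{1..K}. \<Sum>j\<in>gr. u k j * \<bar>f j - l j - c k\<bar>\<^sup>2)"
      using dat by (intro sum_mono) auto
    have T: "(\<Sum>k\<in>{1..K}. lam k * (\<Sum>j\<in>gr. \<bar>grad_abs d ns (u' k) j\<bar>))
            = (\<Sum>k\<in>{1..K}. lam k * (\<Sum>j\<in>gr. \<bar>grad_abs d ns (u k) j\<bar>))"
      using tv by (intro sum.cong refl arg_cong2[where f = "(*)"]) auto
    have Rg: "(\<Sum>j\<in>gr. \<Sum>i\<in>{1..d}. (grad ns l' i j)\<^sup>2) = (\<Sum>j\<in>gr. \<Sum>i\<in>{1..d}. (grad ns l i j)\<^sup>2)"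
      using reg by (intro sum.cong refl) auto
    have "G (u', c', l') \<le> G (u, c, l)"
      unfolding G_def Gf_def fst_conv snd_conv gr_def[symmetric] T Rg using D by linarith
    moreover have "(u', c', l') \<in> S" using u'U c'C l'L by (simp add: S_def)
    ultimately show ?thesis by blast
  qed
  have minE: "energy d ns K f lam \<gamma> um cm lm \<le> energy d ns K f lam \<gamma> u c l" for u c l
  proof (cases "in_simplex_field d ns K u")
    case False
    then show ?thesis by (simp add: energy_eq)
  next
    case True
    have "G xm \<le> G (u, c, l)"
    proof (cases "G (u, c, l) \<le> E0")
      case True2: True
      then obtain y where "y \<in> S" "G y \<le> G (u, c, l)" using key[OF True] by blast
      then show ?thesis using xm[of y] by linarith
    next
      case False
      then show ?thesis using xm[OF x0S] unfolding E0_def by linarith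
    qed
    then show ?thesis using True simpm by (simp add: energy_eq G_def xm_eq)
  qed
  have eq: "(INF (u, c, l) \<in> UNIV. energy d ns K f lam \<gamma> u c l) = energy d ns K f lam \<gamma> um cm lm"
  proof (rule antisym)
    show "(INF (u, c, l) \<in> UNIV. energy d ns K f lam \<gamma> u c l) \<le> energy d ns K f lam \<gamma> um cm lm"
      by (rule INF_lower2[of "(um, cm, lm)"]) auto
    show "energy d ns K f lam \<gamma> um cm lm \<le> (INF (u, c, l) \<in> UNIV. energy d ns K f lam \<gamma> u c l)"
      by (rule INF_greatest) (auto simp: minE)
  qed
  have "energy d ns K f lam \<gamma> um cm lm < \<infinity>" using simpm by (simp add: energy_eq)
  then show ?thesis using eq by metis
qed

end
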